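(* The periodic points of $\Phi_{\mathrm{Id}}\colon\mathcal{M}(2;\mathbb{C})\to\mathcal{M}(2;\mathbb{C})$, $\mathrm{M}\mapsto\mathrm{M}^2$, other than the zero matrix $\mathbf{0}$, are contained in the boundary $\partial\mathrm{W}^s_{\mathrm{Id}}(\mathbf{0})$ of the basin of attraction of $\mathbf{0}$.
   Context: $\mathrm{W}^s_{\mathrm{Id}}(\mathbf{0})=\{\mathrm{M}\in\mathcal{M}(2;\mathbb{C}):\Phi_{\mathrm{Id}}^k(\mathrm{M})\to\mathbf{0}\text{ as }k\to\infty\}$. A point is periodic if $\Phi_{\mathrm{Id}}^k(\mathrm{M})=\mathrm{M}$ for some $k\geq1$. *)

theory Defs
  imports "HOL-Analysis.Analysis"
begin

type_synonym cmat2 = "complex ^ 2 ^ 2"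

definition Phi_Id :: "cmat2 \<Rightarrow> cmat2" where
  "Phi_Id M = M ** M"

definition Ws_Id_zero :: "cmat2 set" where
  "Ws_Id_zero = {M. (\<lambda>k. (Phi_Id ^^ k) M) \<longlonglongrightarrow> 0}"

definition periodic_point :: "('a \<Rightarrow> 'a) \<Rightarrow> 'a \<Rightarrow> bool" where
  "periodic_point f x \<longleftrightarrow> (\<exists>k\<ge>1. (f ^^ k) x = x)"

end

theory Submission
  imports Defs
begin

lemma mm_scaleR: "((c::real) *\<^sub>R A) ** (d *\<^sub>R B) = (c*d) *\<^sub>R (A ** (B::cmat2))"
  by (simp add: vec_eq_iff matrix_matrix_mult_def scaleR_sum_right mult.commute)

lemma iter_scale: "(Phi_Id ^^ n) (c *\<^sub>R M) = (c^(2^n)) *\<^sub>R (Phi_Id ^^ n) M"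
  by (induction n) (simp_all add: Phi_Id_def mm_scaleR power_add[symmetric] mult_2)

lemma iter_mult:
  assumes "(Phi_Id ^^ k) M = M"
  shows "(Phi_Id ^^ (q*k)) M = M"
proof (induction q)
  case (Suc q)
  have "(Phi_Id ^^ (Suc q * k)) M = (Phi_Id ^^ k) ((Phi_Id ^^ (q*k)) M)"
    by (simp add: funpow_add)
  then show ?case using Suc assms by simp
qed simp

lemma iter_mod:
  assumes "(Phi_Id ^^ k) M = M"
  shows "(Phi_Id ^^ n) M = (Phi_Id ^^ (n mod k)) M"
proof -
  have "n = n mod k + (n div k) * k" by simp
  then have "(Phi_Id ^^ n) M = (Phi_Id ^^ (n mod k)) ((Phi_Id ^^ ((n div k) * k)) M)"
    by (metis comp_apply funpow_add)
  then show ?thesis using iter_mult[OF assms] by simp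
qed

theorem proposition3p3:
  fixes M :: cmat2
  assumes "periodic_point Phi_Id M" and "M \<noteq> 0"
  shows "M \<in> frontier Ws_Id_zero"
proof -
  obtain k where k: "k \<ge> 1" "(Phi_Id ^^ k) M = M"
    using assms(1) unfolding periodic_point_def by blast
  define X where "X n = (Phi_Id ^^ n) M" for n
  define B where "B = (\<Sum>j<k. norm (X j))"
  have bnd: "norm (X n) \<le> B" for n
  proof -
    have "X n = X (n mod k)" unfolding X_def using iter_mod[OF k(2)] by simp
    moreover have "n mod k \<in> {..<k}" using k(1) by simp
    ultimately show ?thesis unfolding B_def
      by (metis finite_lessThan member_le_sum norm_ge_zero)
  qed
  have notin: "M \<notin> Ws_Id_zero"
  proof
    assume "M \<in> Ws_Id_zero"
    then have t: "X \<longlonglongrightarrow> 0" unfolding Ws_Id_zero_def X_def by simp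
    have sm: "strict_mono (\<lambda>q. q * k)" using k(1) by (simp add: strict_mono_def)
    have "(\<lambda>q. X (q*k)) \<longlonglongrightarrow> 0" using LIMSEQ_subseq_LIMSEQ[OF t sm] by (simp add: o_def)
    moreover have "(\<lambda>q. X (q*k)) = (\<lambda>q. M)" using iter_mult[OF k(2)] by (simp add: X_def)
    ultimately have "(\<lambda>q. M) \<longlonglongrightarrow> 0" by simp
    then have "M = 0" using LIMSEQ_const_iff by blast
    then show False using assms(2) by simp
  qed
  have inS: "c *\<^sub>R M \<in> Ws_Id_zero" if c: "0 \<le> c" "c < 1" for c :: real
  proof -
    have "(\<lambda>n. (c^(2^n)) *\<^sub>R X n) \<longlonglongrightarrow> 0"
    proof (rule Lim_null_comparison)
      show "\<forall>\<^sub>F n in sequentially. norm ((c^(2^n)) *\<^sub>R X n) \<le> c^n * B"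
      proof (rule always_eventually, rule allI)
        fix n
        have "c^(2^n) \<le> c^n"
          using c by (intro power_decreasing) (auto intro: less_imp_le)
        then have "norm ((c^(2^n)) *\<^sub>R X n) = c^(2^n) * norm (X n)" using c by simp
        also have "\<dots> \<le> c^n * B"
          using \<open>c^(2^n) \<le> c^n\<close> bnd[of n] c by (intro mult_mono) auto
        finally show "norm ((c^(2^n)) *\<^sub>R X n) \<le> c^n * B" .
      qed
      show "(\<lambda>n. c^n * B) \<longlonglongrightarrow> 0"
        using c by (intro tendsto_mult_left_zero LIMSEQ_power_zero) auto
    qed
    then show ?thesis unfolding Ws_Id_zero_def X_def by (simp add: iter_scale)
  qed
  have cl: "M \<in> closure Ws_Id_zero"
  proof -
    define f where "f j = (1 - 1/(real j + 2)) *\<^sub>R M" for j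
    have "\<forall>j. f j \<in> Ws_Id_zero" unfolding f_def
      by (intro allI inS) (auto simp: field_simps)
    moreover have "f \<longlonglongrightarrow> M"
    proof -
      have "(\<lambda>j. 1 - 1/(real j + 2)) \<longlonglongrightarrow> 1 - 0"
        by (intro tendsto_diff tendsto_const) real_asymp
      then have "f \<longlonglongrightarrow> 1 *\<^sub>R M" unfolding f_def
        by (intro tendsto_scaleR tendsto_const) simp
      then show ?thesis by simp
    qed
    ultimately show ?thesis unfolding closure_sequential by blast
  qed
  show ?thesis unfolding frontier_def using cl notin interior_subset by blast
qed

end
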